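(* Let $\mathcal{T}\in\mathbb{K}^{R\times R\times K}$ have $\mathbb{K}$-rank $R$ and full multilinear rank $(R,R,K)$, and let $\mathcal{T}=[\![\mathbf{A},\mathbf{B},\mathbf{C}]\!]$ be a CPD of $\mathcal{T}$. Then $\mathcal{T}$ is slice mix invertible and the factor matrices $\mathbf{A},\mathbf{B}\in\mathbb{K}^{R\times R}$ are invertible.
   Context: $\mathbb{K}$ denotes $\mathbb{R}$ or $\mathbb{C}$. The $\mathbb{K}$-rank is the least number of rank one tensors $\mathbf{a}\otimes\mathbf{b}\otimes\mathbf{c}$ with $\mathbb{K}$-valued factors summing to the tensor; a minimal sum $\sum_{r=1}^R\mathbf{a}_r\otimes\mathbf{b}_r\otimes\mathbf{c}_r$ is a CPD written $[\![\mathbf{A},\mathbf{B},\mathbf{C}]\!]$ (columns $\mathbf{a}_r$, etc.). Multilinear rank $(R_1,R_2,R_3)$: $R_i$ is the dimension of the span of the mode-$i$ fibers. $\mathcal{T}$ is slice mix invertible if some linear combination of its frontal slices $\mathcal{T}(:,:,k)$ is an invertible matrix. *)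

theory Defs
  imports "HOL-Analysis.Analysis"
begin

text \<open>Third-order tensors of size I x J x K over a field 'a are functions
  'i => 'j => 'k => 'a on finite index types; dimensions are CARD('i) etc.\<close>

definition has_rank_le_decomp :: "('i::finite \<Rightarrow> 'j::finite \<Rightarrow> 'k::finite \<Rightarrow> 'a::field) \<Rightarrow> nat \<Rightarrow> bool" where
  "has_rank_le_decomp T n \<longleftrightarrow>
     (\<exists>(a::nat \<Rightarrow> 'i \<Rightarrow> 'a) (b::nat \<Rightarrow> 'j \<Rightarrow> 'a) (c::nat \<Rightarrow> 'k \<Rightarrow> 'a).
        T = (\<lambda>i j k. \<Sum>r<n. a r i * b r j * c r k))"

definition tensor_rank :: "('i::finite \<Rightarrow> 'j::finite \<Rightarrow> 'k::finite \<Rightarrow> 'a::field) \<Rightarrow> nat" where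
  "tensor_rank T = (LEAST n. has_rank_le_decomp T n)"

text \<open>[[A,B,C]] with R columns indexed by 'r; A is I x R, B is J x R, C is K x R.\<close>
definition cpd :: "'a::field ^'r::finite^'i::finite \<Rightarrow> 'a^'r^'j::finite \<Rightarrow> 'a^'r^'k::finite
                   \<Rightarrow> ('i \<Rightarrow> 'j \<Rightarrow> 'k \<Rightarrow> 'a)" where
  "cpd A B C = (\<lambda>i j k. \<Sum>r\<in>UNIV. A$i$r * B$j$r * C$k$r)"

definition mode1_fibers :: "('i::finite \<Rightarrow> 'j::finite \<Rightarrow> 'k::finite \<Rightarrow> 'a::field) \<Rightarrow> ('a^'i) set" where
  "mode1_fibers T = {(\<chi> i. T i j k) | j k. True}"
definition mode2_fibers :: "('i::finite \<Rightarrow> 'j::finite \<Rightarrow> 'k::finite \<Rightarrow> 'a::field) \<Rightarrow> ('a^'j) set" where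
  "mode2_fibers T = {(\<chi> j. T i j k) | i k. True}"
definition mode3_fibers :: "('i::finite \<Rightarrow> 'j::finite \<Rightarrow> 'k::finite \<Rightarrow> 'a::field) \<Rightarrow> ('a^'k) set" where
  "mode3_fibers T = {(\<chi> k. T i j k) | i j. True}"

definition multilinear_rank :: "('i::finite \<Rightarrow> 'j::finite \<Rightarrow> 'k::finite \<Rightarrow> 'a::field) \<Rightarrow> nat \<times> nat \<times> nat" where
  "multilinear_rank T = (vec.dim (mode1_fibers T), vec.dim (mode2_fibers T), vec.dim (mode3_fibers T))"

definition frontal_slice :: "('i::finite \<Rightarrow> 'j::finite \<Rightarrow> 'k::finite \<Rightarrow> 'a::field) \<Rightarrow> 'k \<Rightarrow> 'a^'j^'i" where
  "frontal_slice T k = (\<chi> i j. T i j k)"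

definition slice_mix_invertible :: "('i::finite \<Rightarrow> 'i \<Rightarrow> 'k::finite \<Rightarrow> 'a::field) \<Rightarrow> bool" where
  "slice_mix_invertible T \<longleftrightarrow> (\<exists>x :: 'k \<Rightarrow> 'a. invertible (\<chi> i j. \<Sum>k\<in>UNIV. x k * frontal_slice T k $ i $ j))"

end

theory Submission
  imports Defs
begin

lemma fiber_invertible:
  fixes A :: "'a::field^'r::finite^'r"
  assumes sub: "S \<subseteq> range (\<lambda>v. A *v v)" and d: "vec.dim S = CARD('r)"
  shows "invertible A"
proof -
  have "vec.span S = UNIV"
    using d vec.dim_eq_full vec_dim_card vec.dim_UNIV vec.dimension_def by metis
  moreover have "vec.subspace (range (\<lambda>v. A *v v))"
    by (rule vec.subspace_UNIV[THEN vec.subspace_image[rotated]])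
  hence "vec.span S \<subseteq> range (\<lambda>v. A *v v)"
    using sub by (simp add: vec.span_minimal)
  ultimately have "surj (\<lambda>v. A *v v)" by auto
  thus ?thesis
    using matrix_right_invertible_surjective invertible_right_inverse by blast
qed

lemma avoid_hyperplanes:
  fixes c :: "'b \<Rightarrow> 'k::finite \<Rightarrow> 'a::field_char_0"
  assumes "finite S" "\<forall>r\<in>S. \<exists>k. c r k \<noteq> 0"
  shows "\<exists>x. \<forall>r\<in>S. (\<Sum>k\<in>UNIV. x k * c r k) \<noteq> 0"
  using assms
proof (induction S rule: finite_induct)
  case empty
  then show ?case by auto
next
  case (insert s S)
  define l where "l r x = (\<Sum>k\<in>UNIV. x k * c r k)" for r x
  have lin: "l r (\<lambda>k. x k + t * y k) = l r x + t * l r y" for r x y t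
    by (simp add: l_def algebra_simps sum.distrib sum_distrib_left)
  obtain x where x: "\<forall>r\<in>S. l r x \<noteq> 0" using insert by (auto simp: l_def)
  obtain ks where ks: "c s ks \<noteq> 0" using insert by auto
  define y where "y = (\<lambda>k. if k = ks then 1 else (0::'a))"
  have "l s y = (\<Sum>k\<in>UNIV. if k = ks then c s k else 0)"
    unfolding l_def y_def by (rule sum.cong) auto
  hence ly: "l s y \<noteq> 0" using ks by simp
  show ?case
  proof (cases "l s x = 0")
    case False
    then show ?thesis using x by (auto simp: l_def)
  next
    case True
    let ?bad = "insert 0 ((\<lambda>r. - l r x / l r y) ` S)"
    have "finite ?bad" using insert by auto
    then obtain t where t: "t \<notin> ?bad"
      using ex_new_if_finite infinite_UNIV_char_0 by blast
    have "\<forall>r\<in>insert s S. l r (\<lambda>k. x k + t * y k) \<noteq> 0"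
    proof
      fix r assume r: "r \<in> insert s S"
      show "l r (\<lambda>k. x k + t * y k) \<noteq> 0"
      proof (cases "r = s")
        case True
        then show ?thesis using \<open>l s x = 0\<close> ly t by (simp add: lin)
      next
        case False
        hence rS: "r \<in> S" using r by auto
        show ?thesis
        proof
          assume h: "l r (\<lambda>k. x k + t * y k) = 0"
          hence e: "l r x + t * l r y = 0" by (simp add: lin)
          have "l r y \<noteq> 0" using e x rS by auto
          hence "t = - l r x / l r y" using e by (simp add: field_simps add_eq_0_iff)
          thus False using t rS by auto
        qed
      qed
    qed
    thus ?thesis by (auto simp: l_def)
  qed
qed

lemma col_nonzero:
  fixes A :: "'a::field^'r::finite^'i::finite" and B :: "'a^'r^'j::finite" and C :: "'a^'r^'k::finite"
  assumes rk: "tensor_rank (cpd A B C) = CARD('r)"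
  shows "\<exists>k. C$k$r0 \<noteq> 0"
proof (rule ccontr)
  assume "\<not> (\<exists>k. C$k$r0 \<noteq> 0)"
  hence z: "\<And>k. C$k$r0 = 0" by auto
  define M where "M = UNIV - {r0}"
  have fM: "finite M" by simp
  obtain h where h: "bij_betw h {0..<card M} M" using ex_bij_betw_nat_finite[OF fM] by blast
  have "has_rank_le_decomp (cpd A B C) (card M)"
    unfolding has_rank_le_decomp_def
  proof (intro exI)
    show "cpd A B C = (\<lambda>i j k. \<Sum>n<card M. (\<lambda>n i. A$i$(h n)) n i * (\<lambda>n j. B$j$(h n)) n j * (\<lambda>n k. C$k$(h n)) n k)"
    proof (intro ext)
      fix i j k
      have "cpd A B C i j k = (\<Sum>r\<in>UNIV. A$i$r * B$j$r * C$k$r)" by (simp add: cpd_def)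
      also have "\<dots> = (\<Sum>r\<in>M. A$i$r * B$j$r * C$k$r)"
        by (rule sum.mono_neutral_right) (auto simp: M_def z)
      also have "\<dots> = (\<Sum>n\<in>{0..<card M}. A$i$(h n) * B$j$(h n) * C$k$(h n))"
        using sum.reindex_bij_betw[OF h, of "\<lambda>r. A$i$r * B$j$r * C$k$r"] by simp
      finally show "cpd A B C i j k = (\<Sum>n<card M. (\<lambda>n i. A$i$(h n)) n i * (\<lambda>n j. B$j$(h n)) n j * (\<lambda>n k. C$k$(h n)) n k)"
        by (simp add: atLeast0LessThan)
    qed
  qed
  hence "tensor_rank (cpd A B C) \<le> card M" unfolding tensor_rank_def by (rule Least_le)
  moreover have "card M = CARD('r) - 1" by (simp add: M_def card_Diff_subset)
  moreover have "CARD('r) > 0" by simp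
  ultimately show False using rk by linarith
qed

lemma main:
  fixes T :: "'r::finite \<Rightarrow> 'r \<Rightarrow> 'k::finite \<Rightarrow> 'a::field_char_0"
    and A :: "'a^'r^'r" and B :: "'a^'r^'r" and C :: "'a^'r^'k"
  assumes rk: "tensor_rank T = CARD('r)"
    and ml: "multilinear_rank T = (CARD('r), CARD('r), CARD('k))"
    and TT: "T = cpd A B C"
  shows "slice_mix_invertible T \<and> invertible A \<and> invertible B"
proof -
  have d1: "vec.dim (mode1_fibers T) = CARD('r)" and d2: "vec.dim (mode2_fibers T) = CARD('r)"
    using ml by (auto simp: multilinear_rank_def)
  have s1: "mode1_fibers T \<subseteq> range (\<lambda>v. A *v v)"
  proof
    fix f assume "f \<in> mode1_fibers T"
    then obtain j k where f: "f = (\<chi> i. T i j k)" by (auto simp: mode1_fibers_def)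
    have "f = A *v (\<chi> r. B$j$r * C$k$r)"
      by (simp add: f TT cpd_def matrix_vector_mult_def vec_eq_iff mult.assoc)
    thus "f \<in> range (\<lambda>v. A *v v)" by blast
  qed
  have s2: "mode2_fibers T \<subseteq> range (\<lambda>v. B *v v)"
  proof
    fix f assume "f \<in> mode2_fibers T"
    then obtain i k where f: "f = (\<chi> j. T i j k)" by (auto simp: mode2_fibers_def)
    have "f = B *v (\<chi> r. A$i$r * C$k$r)"
      by (simp add: f TT cpd_def matrix_vector_mult_def vec_eq_iff mult.assoc mult.left_commute)
    thus "f \<in> range (\<lambda>v. B *v v)" by blast
  qed
  have iA: "invertible A" using fiber_invertible[OF s1 d1] .
  have iB: "invertible B" using fiber_invertible[OF s2 d2] .
  have "\<forall>r\<in>UNIV. \<exists>k. (\<lambda>r k. C$k$r) r k \<noteq> 0"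
    using col_nonzero[of A B C] rk TT by auto
  then obtain x where x: "\<forall>r\<in>UNIV. (\<Sum>k\<in>UNIV. x k * C$k$r) \<noteq> 0"
    using avoid_hyperplanes[of "UNIV::'r set" "\<lambda>r k. C$k$r"] by auto
  define d where "d r = (\<Sum>k\<in>UNIV. x k * C$k$r)" for r
  define D :: "'a^'r^'r" where "D = (\<chi> i j. if i = j then d i else 0)"
  have eq: "(\<chi> i j. \<Sum>k\<in>UNIV. x k * frontal_slice T k $ i $ j) = A ** D ** transpose B"
  proof -
    have "(\<Sum>k\<in>UNIV. x k * frontal_slice T k $ i $ j) = (A ** D ** transpose B) $ i $ j" for i j
    proof -
      have "(\<Sum>k\<in>UNIV. x k * frontal_slice T k $ i $ j) = (\<Sum>k\<in>UNIV. \<Sum>r\<in>UNIV. x k * (A$i$r * B$j$r * C$k$r))"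
        by (simp add: frontal_slice_def TT cpd_def sum_distrib_left)
      also have "\<dots> = (\<Sum>r\<in>UNIV. A$i$r * d r * B$j$r)"
        by (subst sum.swap) (simp add: d_def sum_distrib_left sum_distrib_right mult_ac)
      also have "\<dots> = (A ** D ** transpose B) $ i $ j"
      proof -
        have "\<And>m. (\<Sum>r\<in>UNIV. A$i$r * (if r = m then d r else 0)) = A$i$m * d m"
          by (simp add: if_distrib cong: if_cong)
        thus ?thesis by (simp add: matrix_matrix_mult_def transpose_def D_def)
      qed
      finally show ?thesis .
    qed
    thus ?thesis by (simp add: vec_eq_iff)
  qed
  have "det D = (\<Prod>i\<in>UNIV. d i)" by (subst det_diagonal) (auto simp: D_def)
  hence "det D \<noteq> 0" using x by (simp add: d_def)
  hence "det (A ** D ** transpose B) \<noteq> 0"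
    using iA iB by (simp add: det_mul invertible_det_nz)
  hence "slice_mix_invertible T"
    unfolding slice_mix_invertible_def eq[symmetric] invertible_det_nz by blast
  thus ?thesis using iA iB by blast
qed

theorem lemma3p1:
  shows "(\<forall>(T :: 'r::finite \<Rightarrow> 'r \<Rightarrow> 'k::finite \<Rightarrow> real)
            (A :: real^'r^'r) (B :: real^'r^'r) (C :: real^'r^'k).
            tensor_rank T = CARD('r) \<and>
            multilinear_rank T = (CARD('r), CARD('r), CARD('k)) \<and>
            T = cpd A B C
            \<longrightarrow> slice_mix_invertible T \<and> invertible A \<and> invertible B)
       \<and> (\<forall>(T :: 'r \<Rightarrow> 'r \<Rightarrow> 'k \<Rightarrow> complex)
            (A :: complex^'r^'r) (B :: complex^'r^'r) (C :: complex^'r^'k).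
            tensor_rank T = CARD('r) \<and>
            multilinear_rank T = (CARD('r), CARD('r), CARD('k)) \<and>
            T = cpd A B C
            \<longrightarrow> slice_mix_invertible T \<and> invertible A \<and> invertible B)"
proof (rule conjI; intro allI impI)
  fix T :: "'r \<Rightarrow> 'r \<Rightarrow> 'k \<Rightarrow> real" and A B :: "real^'r^'r" and C :: "real^'r^'k"
  assume "tensor_rank T = CARD('r) \<and> multilinear_rank T = (CARD('r), CARD('r), CARD('k)) \<and> T = cpd A B C"
  thus "slice_mix_invertible T \<and> invertible A \<and> invertible B" using main[of T A B C] by blast
next
  fix T :: "'r \<Rightarrow> 'r \<Rightarrow> 'k \<Rightarrow> complex" and A B :: "complex^'r^'r" and C :: "complex^'r^'k"
  assume "tensor_rank T = CARD('r) \<and> multilinear_rank T = (CARD('r), CARD('r), CARD('k)) \<and> T = cpd A B C"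
  thus "slice_mix_invertible T \<and> invertible A \<and> invertible B" using main[of T A B C] by blast
qed

end
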